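(* Let $n\ge1$ and let $T\in\mathcal{L}(\mathcal{H})$ be $n$-EP. If $T$ is regular, then $T$ is invertible.
   Context: $\mathcal{H}$ is a Hilbert space, $\mathcal{L}(\mathcal{H})$ the bounded operators on it; $N(\cdot)$ and $R(\cdot)$ denote kernel and range. $T$ is regular if $T$ has closed range and $N(T)\subset R(T^k)$ for every integer $k\ge0$. For $T$ with closed range, $T^\dagger$ is its Moore–Penrose inverse (unique solution of $TT^\dagger T=T$, $T^\dagger TT^\dagger=T^\dagger$, $(T^\dagger T)^*=T^\dagger T$, $(TT^\dagger)^*=TT^\dagger$). $T$ is $n$-EP if it has closed range and $T^nT^\dagger=T^\dagger T^n$. *)

theory Defs
  imports "HOL-Analysis.Analysis"
begin

text \<open>Bounded operators on a (real) Hilbert space 'a :: {real_inner, complete_space}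
  are represented as functions T :: 'a \<Rightarrow> 'a with bounded_linear T.\<close>

definition moore_penrose_inverse :: "('a::real_inner \<Rightarrow> 'a) \<Rightarrow> ('a \<Rightarrow> 'a) \<Rightarrow> bool" where
  "moore_penrose_inverse T S \<longleftrightarrow>
     bounded_linear S \<and>
     T \<circ> S \<circ> T = T \<and>
     S \<circ> T \<circ> S = S \<and>
     (\<forall>x y. inner (S (T x)) y = inner x (S (T y))) \<and>
     (\<forall>x y. inner (T (S x)) y = inner x (T (S y)))"

definition regular_op :: "('a::real_inner \<Rightarrow> 'a) \<Rightarrow> bool" where
  "regular_op T \<longleftrightarrow> closed (range T) \<and> (\<forall>k::nat. {x. T x = 0} \<subseteq> range (T ^^ k))"

definition n_EP :: "nat \<Rightarrow> ('a::real_inner \<Rightarrow> 'a) \<Rightarrow> bool" where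
  "n_EP n T \<longleftrightarrow> closed (range T) \<and>
     (\<exists>S. moore_penrose_inverse T S \<and> (T ^^ n) \<circ> S = S \<circ> (T ^^ n))"

definition invertible_op :: "('a::real_normed_vector \<Rightarrow> 'a) \<Rightarrow> bool" where
  "invertible_op T \<longleftrightarrow> (\<exists>S. bounded_linear S \<and> T \<circ> S = id \<and> S \<circ> T = id)"

end

theory Submission
  imports Defs
begin

lemma funpow_zero_iff:
  fixes T :: "'a::real_normed_vector \<Rightarrow> 'a"
  assumes "bounded_linear T" "\<And>x. T x = 0 \<Longrightarrow> x = 0"
  shows "(T ^^ m) z = 0 \<longleftrightarrow> z = 0"
proof (induction m arbitrary: z)
  case 0 then show ?case by simp
next
  case (Suc m)
  have "T 0 = 0" using assms(1) by (simp add: linear_simps)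
  then show ?case using Suc.IH assms(2) by (metis comp_apply funpow.simps(2))
qed

theorem mainTheorem20:
  fixes T :: "'a::{real_inner, complete_space} \<Rightarrow> 'a" and n :: nat
  assumes "n \<ge> 1"
    and "bounded_linear T"
    and "n_EP n T"
    and "regular_op T"
  shows "invertible_op T"
proof -
  obtain S where mp: "moore_penrose_inverse T S" and comm: "(T ^^ n) \<circ> S = S \<circ> (T ^^ n)"
    using assms(3) n_EP_def by blast
  have bS: "bounded_linear S" and TST: "T \<circ> S \<circ> T = T" and STS: "S \<circ> T \<circ> S = S"
    using mp moore_penrose_inverse_def by blast+
  have TST': "\<And>x. T (S (T x)) = T x" using TST by (metis comp_apply)
  have STS': "\<And>x. S (T (S x)) = S x" using STS by (metis comp_apply)
  have comm': "\<And>x. (T ^^ n) (S x) = S ((T ^^ n) x)" using comm by (metis comp_apply)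
  obtain m where n: "n = Suc m" using assms(1) by (cases n) auto
  have T0: "T 0 = 0" using assms(2) by (simp add: linear_simps)
  have S0: "S 0 = 0" using bS by (simp add: linear_simps)
  have e1: "\<And>y. (T ^^ n) y = S ((T ^^ n) (T y))"
  proof -
    fix y
    have "(T ^^ n) y = (T ^^ m) (T y)" by (simp add: n funpow_Suc_right del: funpow.simps)
    also have "\<dots> = (T ^^ m) (T (S (T y)))" by (simp add: TST')
    also have "\<dots> = (T ^^ n) (S (T y))" by (simp add: n funpow_Suc_right del: funpow.simps)
    also have "\<dots> = S ((T ^^ n) (T y))" by (rule comm')
    finally show "(T ^^ n) y = S ((T ^^ n) (T y))" .
  qed
  have inj0: "\<And>x. T x = 0 \<Longrightarrow> x = 0"
  proof -
    fix x assume Tx: "T x = 0"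
    have "x \<in> range (T ^^ n)" using assms(4) Tx unfolding regular_op_def by blast
    then obtain y where xy: "x = (T ^^ n) y" by blast
    have "x = S ((T ^^ n) (T y))" using xy e1[of y] by simp
    then have "S (T x) = x" using STS' by metis
    then show "x = 0" using Tx S0 by simp
  qed
  have e2: "\<And>z. (T ^^ n) z = T (S ((T ^^ n) z))"
  proof -
    fix z
    have "(T ^^ n) z = T ((T ^^ m) z)" by (simp add: n)
    also have "\<dots> = T (S (T ((T ^^ m) z)))" by (simp add: TST')
    finally show "(T ^^ n) z = T (S ((T ^^ n) z))" by (simp add: n)
  qed
  have Sinj0: "\<And>z. S z = 0 \<Longrightarrow> z = 0"
  proof -
    fix z assume Sz: "S z = 0"
    have "(T ^^ n) z = T ((T ^^ n) (S z))" using e2[of z] comm'[of z] by simp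
    also have "\<dots> = 0" using Sz T0 funpow_zero_iff[OF assms(2) inj0] by metis
    finally show "z = 0" using funpow_zero_iff[OF assms(2) inj0] by simp
  qed
  have TS: "\<And>z. T (S z) = z"
  proof -
    fix z
    have "S (z - T (S z)) = S z - S (T (S z))" using bS by (simp add: linear_simps)
    also have "\<dots> = 0" using STS' by simp
    finally show "T (S z) = z" using Sinj0 by fastforce
  qed
  have ST: "\<And>x. S (T x) = x"
  proof -
    fix x
    have "T (S (T x) - x) = T (S (T x)) - T x" using assms(2) by (simp add: linear_simps)
    also have "\<dots> = 0" using TST' by simp
    finally show "S (T x) = x" using inj0 by fastforce
  qed
  show ?thesis unfolding invertible_op_def
    using bS TS ST by (intro exI[of _ S]) (auto simp: fun_eq_iff)
qed

end
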